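(* Let $g\ge1$, $n\ge3$ and $x\in A_g^n$. Then: \begin{enumerate} \item $1/g>x_1\ge x_n>0$; \item for no $k\in\{1,\dots,n-1\}$ do $x_k=x_{k+1}$ and $x_1\cdots x_k=g(x_{k+1}+\dots+x_n)$ hold simultaneously; \item if for some $1\le k\le n-1$ the equality $x_1\cdots x_i=g(x_{i+1}+\dots+x_n)$ holds for all $i\le k$, then $x_i=1/s_{g,i}$ for all $i=1,\dots,k$. \end{enumerate}
   Context: For $g,n\ge1$, $A_g^n\subseteq\mathbb{R}^n$ is the set of $(x_1,\dots,x_n)$ with (A1) $x_1\ge\dots\ge x_n\ge0$; (A2) $x_1+\dots+x_n=1/g$; (A3) $x_1\cdots x_k\le g(x_{k+1}+\dots+x_n)$ for all $k=1,\dots,n-1$. Sylvester sequence: $s_{g,1}=g+1$, $s_{g,k+1}=s_{g,k}(s_{g,k}-1)+1$. *)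

theory Defs
  imports Main "HOL.Real"
begin

text \<open>Points of R^n are represented as functions nat => real; only the
  coordinates x 1, ..., x n are meaningful.\<close>

definition A_set :: "nat \<Rightarrow> nat \<Rightarrow> (nat \<Rightarrow> real) set" where
  "A_set g n = {x.
     (\<forall>i\<in>{1..<n}. x i \<ge> x (Suc i)) \<and> x n \<ge> 0 \<and>
     (\<Sum>i=1..n. x i) = 1 / real g \<and>
     (\<forall>k\<in>{1..<n}. (\<Prod>i=1..k. x i) \<le> real g * (\<Sum>i=Suc k..n. x i))}"

primrec sylv_aux :: "nat \<Rightarrow> nat \<Rightarrow> nat" where
  "sylv_aux g 0 = g + 1"
| "sylv_aux g (Suc k) = sylv_aux g k * (sylv_aux g k - 1) + 1"

text \<open>s g k = s_{g,k} for k >= 1.\<close>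
definition sylv :: "nat \<Rightarrow> nat \<Rightarrow> nat" where
  "sylv g k = sylv_aux g (k - 1)"

end

theory Submission
  imports Defs
begin

lemma sylv_aux_ge: "g \<ge> 1 \<Longrightarrow> sylv_aux g j \<ge> 2"
proof (induction j)
  case 0 then show ?case by simp
next
  case (Suc j)
  then have "sylv_aux g j - 1 \<ge> 1" by simp
  then have "sylv_aux g j * (sylv_aux g j - 1) \<ge> 2 * 1"
    using Suc by (intro mult_le_mono) auto
  moreover have "sylv_aux g (Suc j) = sylv_aux g j * (sylv_aux g j - 1) + 1" by simp
  ultimately show ?case by linarith
qed

lemma sylv_aux_Suc_real: "g \<ge> 1 \<Longrightarrow>
  real (sylv_aux g (Suc j)) = real (sylv_aux g j) * (real (sylv_aux g j) - 1) + 1"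
  using sylv_aux_ge[of g j] by (simp add: of_nat_diff)

theorem proposition3p6:
  fixes g n :: nat and x :: "nat \<Rightarrow> real"
  assumes "g \<ge> 1" and "n \<ge> 3" and "x \<in> A_set g n"
  shows "(1 / real g > x 1 \<and> x 1 \<ge> x n \<and> x n > 0) \<and>
    (\<not> (\<exists>k\<in>{1..<n}. x k = x (Suc k) \<and>
              (\<Prod>i=1..k. x i) = real g * (\<Sum>j=Suc k..n. x j))) \<and>
    (\<forall>k\<in>{1..<n}. (\<forall>i\<in>{1..k}. (\<Prod>j=1..i. x j) = real g * (\<Sum>j=Suc i..n. x j))
            \<longrightarrow> (\<forall>i\<in>{1..k}. x i = 1 / real (sylv g i)))"
proof -
  define P where "P = (\<lambda>k. \<Prod>i=1..k. x i)"
  define S where "S = (\<lambda>k. \<Sum>i=k..n. x i)"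
  from assms(3) have mono: "\<And>i. 1 \<le> i \<Longrightarrow> i < n \<Longrightarrow> x (Suc i) \<le> x i"
    and xn0: "x n \<ge> 0" and sum1: "(\<Sum>i=1..n. x i) = 1 / real g"
    and cond: "\<And>k. 1 \<le> k \<Longrightarrow> k < n \<Longrightarrow> P k \<le> real g * S (Suc k)"
    by (auto simp: A_set_def P_def S_def)
  have g1: "real g \<ge> 1" using assms(1) by simp
  have dec: "x j \<le> x i" if "1 \<le> i" "i \<le> j" "j \<le> n" for i j
    using that(2,3)
  proof (induction j rule: dec_induct)
    case base then show ?case by simp
  next
    case (step m)
    then show ?case using mono[of m] that(1) by linarith
  qed
  have nonneg: "0 \<le> x i" if "1 \<le> i" "i \<le> n" for i
    using dec[of i n] that xn0 by simp
  have PSuc: "P (Suc k) = P k * x (Suc k)" for k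
    by (simp add: P_def prod.cl_ivl_Suc)
  have P0: "P 0 = 1" by (simp add: P_def)
  have S1: "S 1 = 1 / real g" using sum1 by (simp add: S_def)
  have SSuc: "S k = x k + S (Suc k)" if "k \<le> n" for k
    using that by (simp add: S_def sum.atLeast_Suc_atMost)
  have SSn: "S (Suc n) = 0" by (simp add: S_def)
  have posall: "\<forall>i\<in>{1..k}. 0 < x i" if "k \<le> n" for k
    using that
  proof (induction k)
    case 0 then show ?case by simp
  next
    case (Suc k)
    show ?case
    proof (cases "k = 0")
      case True
      have "(\<Sum>i=1..n. x i) \<le> of_nat (card {1..n}) * x 1"
        by (rule sum_bounded_above) (use dec in auto)
      then have "1 / real g \<le> real n * x 1" using sum1 by simp
      moreover have "1 / real g > 0" using g1 by simp
      ultimately have "x 1 > 0"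
        by (metis less_le_trans mult_le_0_iff nonneg[of 1] assms(2) le_less not_le of_nat_0_le_iff
            One_nat_def le_add1 numeral_3_eq_3 le_trans Suc_le_mono)
      then show ?thesis using True by simp
    next
      case False
      have IH: "\<forall>i\<in>{1..k}. 0 < x i" using Suc by simp
      have "P k > 0" unfolding P_def using IH by (intro prod_pos) auto
      moreover have "P k \<le> real g * S (Suc k)" using cond[of k] False Suc.prems by simp
      ultimately have "S (Suc k) > 0" using g1
        by (smt (verit) mult_nonneg_nonpos)
      moreover have "S (Suc k) \<le> of_nat (card {Suc k..n}) * x (Suc k)"
        unfolding S_def by (rule sum_bounded_above) (use dec in auto)
      ultimately have "x (Suc k) > 0"
        by (smt (verit) mult_nonneg_nonpos of_nat_0_le_iff)
      then show ?thesis using IH by (auto simp: le_Suc_eq)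
    qed
  qed
  have pos: "0 < x i" if "1 \<le> i" "i \<le> n" for i
    using posall[of n] that by auto
  have S2pos: "S 2 > 0"
    unfolding S_def using pos assms(2) by (intro sum_pos) auto
  have x1lt: "x 1 < 1 / real g"
    using SSuc[of 1] S1 S2pos assms(2) by (simp add: numeral_2_eq_2)
  have xlt1: "x i < 1" if "1 \<le> i" "i \<le> n" for i
  proof -
    have "1 / real g \<le> 1" using g1 by simp
    then show ?thesis using dec[of 1 i] that x1lt by simp
  qed
  have Ppos: "P k > 0" if "k \<le> n" for k
    unfolding P_def using pos that by (intro prod_pos) auto
  have Ple1: "P k \<le> 1" if "k \<le> n" for k
    unfolding P_def using nonneg xlt1 that by (intro prod_le_1) (auto simp: less_imp_le)
  have Plt1: "P k < 1" if kk: "1 \<le> k" "k \<le> n" for k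
  proof -
    obtain m where k: "k = Suc m" using kk by (cases k) auto
    have "P k = P m * x k" using PSuc k by simp
    also have "\<dots> \<le> x k"
      using Ple1[of m] Ppos[of m] pos[of k] that k by (intro mult_left_le_one_le) auto
    also have "\<dots> < 1" using xlt1 that by simp
    finally show ?thesis .
  qed
  have part1: "1 / real g > x 1 \<and> x 1 \<ge> x n \<and> x n > 0"
    using x1lt dec[of 1 n] pos[of n] assms(2) by simp
  have part2: "\<not> (\<exists>k\<in>{1..<n}. x k = x (Suc k) \<and> P k = real g * S (Suc k))"
  proof
    assume "\<exists>k\<in>{1..<n}. x k = x (Suc k) \<and> P k = real g * S (Suc k)"
    then obtain k where k: "1 \<le> k" "k < n" and eqx: "x k = x (Suc k)"
      and eqP: "P k = real g * S (Suc k)" by auto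
    define t where "t = x k"
    obtain m where km: "k = Suc m" using k by (cases k) auto
    define q where "q = P m"
    have tpos: "t > 0" using pos k by (simp add: t_def)
    have qpos: "q > 0" "q \<le> 1" using Ppos Ple1 km k by (auto simp: q_def)
    have Pk: "P k = q * t" using PSuc km by (simp add: q_def t_def)
    show False
    proof (cases "Suc k < n")
      case True
      have c: "P (Suc k) \<le> real g * S (Suc (Suc k))" using cond[of "Suc k"] True by simp
      have "S (Suc k) = t + S (Suc (Suc k))" using SSuc[of "Suc k"] True eqx by (simp add: t_def)
      then have "q * t * t \<le> q * t - real g * t"
        using c PSuc[of k] eqP eqx Pk by (simp add: t_def algebra_simps)
      moreover have "real g * t \<ge> t" using g1 tpos by simp
      moreover have "q * t * t > 0" using qpos tpos by simp
      moreover have "q * t \<le> t" using qpos tpos by simp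
      ultimately show False by linarith
    next
      case False
      then have n: "n = Suc k" using k by simp
      have "S (Suc k) = t" using SSuc[of n] SSn n eqx by (simp add: t_def)
      then have "q * t = real g * t" using eqP Pk by simp
      then have "q = real g" using tpos by simp
      moreover have "q < 1" unfolding q_def using Plt1[of m] km n assms(2) by simp
      ultimately show False using g1 by simp
    qed
  qed
  have part3: "\<forall>k\<in>{1..<n}. (\<forall>i\<in>{1..k}. P i = real g * S (Suc i))
            \<longrightarrow> (\<forall>i\<in>{1..k}. x i = 1 / real (sylv g i))"
  proof (intro ballI impI)
    fix k i assume k: "k \<in> {1..<n}" and H: "\<forall>i\<in>{1..k}. P i = real g * S (Suc i)"
      and i: "i \<in> {1..k}"
    define s where "s = (\<lambda>j. real (sylv_aux g j))"
    have s2: "s j \<ge> 2" for j using sylv_aux_ge[OF assms(1), of j] by (simp add: s_def)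
    have sS: "s (Suc j) = s j * (s j - 1) + 1" for j
      using sylv_aux_Suc_real[OF assms(1)] by (simp add: s_def)
    have claim: "x (Suc j) = 1 / s j \<and> P (Suc j) = real g / (s j * (s j - 1))"
      if "Suc j \<le> k" for j
      using that
    proof (induction j)
      case 0
      have a: "P 1 = real g * S 2" using H k 0 by (simp add: numeral_2_eq_2)
      have b: "S 1 = x 1 + S 2" using SSuc[of 1] k by (simp add: numeral_2_eq_2)
      have P1: "P 1 = x 1" using PSuc[of 0] P0 by simp
      have "x 1 = 1 - real g * x 1" using a b S1 P1 g1 by (simp add: field_simps)
      then have x1: "x 1 = 1 / (real g + 1)" using g1 by (simp add: field_simps)
      have "s 0 = real g + 1" by (simp add: s_def)
      moreover have "real g / ((real g+1)*(real g + 1 - 1)) = 1/(real g+1)"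
        using g1 by (simp add: divide_simps)
      ultimately show ?case using x1 P1 by simp
    next
      case (Suc j)
      then have IH: "x (Suc j) = 1 / s j" "P (Suc j) = real g / (s j * (s j - 1))" by auto
      have a: "P (Suc j) = real g * S (Suc (Suc j))" using H Suc.prems by simp
      have b: "P (Suc (Suc j)) = real g * S (Suc (Suc (Suc j)))" using H Suc.prems by simp
      have c: "S (Suc (Suc j)) = x (Suc (Suc j)) + S (Suc (Suc (Suc j)))"
        using SSuc[of "Suc (Suc j)"] Suc.prems k by simp
      define p where "p = P (Suc j)"
      define y where "y = x (Suc (Suc j))"
      have "p = real g * y + p * y" using a b c PSuc[of "Suc j"] by (simp add: p_def y_def algebra_simps)
      have ppos: "p > 0" using Ppos[of "Suc j"] Suc.prems k by (simp add: p_def)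
      have e: "y = p / (real g + p)" using \<open>p = real g * y + p * y\<close> ppos g1
        by (simp add: field_simps)
      define a' where "a' = s j"
      have a2: "a' \<ge> 2" using s2 by (simp add: a'_def)
      have pv: "p = real g / (a' * (a' - 1))" using IH by (simp add: p_def a'_def)
      have ss: "s (Suc j) = a' * (a' - 1) + 1" using sS by (simp add: a'_def)
      have d: "a' * (a' - 1) > 0" using a2 by simp
      define D where "D = a' * (a' - 1)"
      have Dp: "D > 0" using d by (simp add: D_def)
      have ne: "real g + D * real g \<noteq> 0" "real g * D + real g \<noteq> 0" proof -
        have "real g * D > 0" using Dp g1 by simp
        then show "real g + D * real g \<noteq> 0" "real g * D + real g \<noteq> 0"
          using g1 by (simp_all add: mult.commute)
      qed
      have "p / (real g + p) = 1 / (D + 1)"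
        using Dp g1 unfolding pv D_def[symmetric] by (simp add: divide_simps ne algebra_simps)
      then have y: "y = 1 / s (Suc j)"
        using e ss by (simp add: D_def)
      have "P (Suc (Suc j)) = p * y" using PSuc by (simp add: p_def y_def)
      also have "\<dots> = (real g / D) * (1 / (D + 1))"
        using pv y ss by (simp add: D_def)
      also have "\<dots> = real g / ((D + 1) * (D + 1 - 1))" by simp
      also have "\<dots> = real g / (s (Suc j) * (s (Suc j) - 1))"
        using ss by (simp add: D_def)
      finally show ?case using y by (simp add: y_def)
    qed
    obtain j where ij: "i = Suc j" using i by (cases i) auto
    have "x i = 1 / s j" using claim[of j] i ij by simp
    then show "x i = 1 / real (sylv g i)" using ij by (simp add: s_def sylv_def)
  qed
  show ?thesis using part1 part2 part3 unfolding P_def S_def by blast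
qed

end
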